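(* Let $M$ be a matroid on $E$ whose dual is transversal with presentation $\mathcal A=(A_1,\ldots,A_r)$, $r=r^*(M)$; let $e\in E$ and let $G$ be a minimal $(e,\mathcal A)$-presenting graph on vertex set $\mathcal A_e(E)$ for which the identity map is the presenting map. Let $i\in[r]$ and $\mathcal A'=(A_1,\ldots,A_{i-1},\mathrm{cl}_M(A_i),A_{i+1},\ldots,A_r)$. Define a graph $G'$ by: (i) if $e\notin\mathrm{cl}_M(A_i)-A_i$, then $G'=G$; (ii) if $e\in\mathrm{cl}_M(A_i)-A_i$, then $G'$ is obtained from $G$ by adding a vertex $i$ and an edge from $i$ to exactly one $j\in\mathcal A_e(\mathrm{cl}_M(A_i))$. Then $G'$ is a minimal $(e,\mathcal A')$-presenting graph (with the identity map as presenting map).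
   Context: $M^*=M[\mathcal A]$, the transversal matroid whose independent sets are the partial transversals of $\mathcal A$. For any sequence $\mathcal B=(B_1,\ldots,B_r)$ of subsets of $E$ and $X\subseteq E$: $\mathcal B(X)=\{i:B_i\subseteq X\}$, $\mathcal B_e(X)=\{i\in\mathcal B(X): e\in B_i\}$. For $U$ a vertex subset, $G[U]$ is the induced subgraph. A graph $H$ with vertex set $\mathcal B_e(E)$ is $(e,\mathcal B)$-presenting if for all distinct $i,j\in\mathcal B_e(E)$ the graph $H[\mathcal B_e(\mathrm{cl}_M(B_i\cup B_j))]$ is connected (closures taken in $M$); it is minimal if deleting any one edge yields a graph that is not $(e,\mathcal B)$-presenting. *)

theory Defs
  imports Main
begin

definition matroid :: "'a set \<Rightarrow> ('a set \<Rightarrow> bool) \<Rightarrow> bool" where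
  "matroid E indep \<longleftrightarrow> finite E \<and> indep {} \<and>
     (\<forall>I. indep I \<longrightarrow> I \<subseteq> E) \<and>
     (\<forall>I J. indep J \<and> I \<subseteq> J \<longrightarrow> indep I) \<and>
     (\<forall>I J. indep I \<and> indep J \<and> card I < card J \<longrightarrow> (\<exists>x\<in>J - I. indep (insert x I)))"

definition rk :: "('a set \<Rightarrow> bool) \<Rightarrow> 'a set \<Rightarrow> nat" where
  "rk indep X = Max {card I | I. I \<subseteq> X \<and> indep I}"

definition cl :: "'a set \<Rightarrow> ('a set \<Rightarrow> bool) \<Rightarrow> 'a set \<Rightarrow> 'a set" where
  "cl E indep X = {x \<in> E. rk indep (insert x X) = rk indep X}"

definition basis :: "('a set \<Rightarrow> bool) \<Rightarrow> 'a set \<Rightarrow> 'a set \<Rightarrow> bool" where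
  "basis indep E B \<longleftrightarrow> indep B \<and> B \<subseteq> E \<and> (\<forall>x\<in>E - B. \<not> indep (insert x B))"

definition dual_indep :: "'a set \<Rightarrow> ('a set \<Rightarrow> bool) \<Rightarrow> 'a set \<Rightarrow> bool" where
  "dual_indep E indep I \<longleftrightarrow> I \<subseteq> E \<and> (\<exists>B. basis indep E B \<and> B \<subseteq> E - I)"

definition partial_transversal :: "'a set \<Rightarrow> nat \<Rightarrow> (nat \<Rightarrow> 'a set) \<Rightarrow> 'a set \<Rightarrow> bool" where
  "partial_transversal E r A X \<longleftrightarrow> X \<subseteq> E \<and>
     (\<exists>f. inj_on f X \<and> f ` X \<subseteq> {1..r} \<and> (\<forall>x\<in>X. x \<in> A (f x)))"

definition dual_presentation :: "'a set \<Rightarrow> ('a set \<Rightarrow> bool) \<Rightarrow> nat \<Rightarrow> (nat \<Rightarrow> 'a set) \<Rightarrow> bool" where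
  "dual_presentation E indep r A \<longleftrightarrow>
     (\<forall>i\<in>{1..r}. A i \<subseteq> E) \<and>
     (\<forall>X. dual_indep E indep X \<longleftrightarrow> partial_transversal E r A X) \<and>
     r = rk (dual_indep E indep) E"

definition idxB :: "nat \<Rightarrow> (nat \<Rightarrow> 'a set) \<Rightarrow> 'a set \<Rightarrow> nat set" where
  "idxB r B X = {i \<in> {1..r}. B i \<subseteq> X}"

definition idxBe :: "nat \<Rightarrow> (nat \<Rightarrow> 'a set) \<Rightarrow> 'a \<Rightarrow> 'a set \<Rightarrow> nat set" where
  "idxBe r B e X = {i \<in> idxB r B X. e \<in> B i}"

definition graph_on :: "nat set \<Rightarrow> nat set set \<Rightarrow> bool" where
  "graph_on V Ed \<longleftrightarrow> (\<forall>ed\<in>Ed. \<exists>u v. ed = {u, v} \<and> u \<noteq> v \<and> u \<in> V \<and> v \<in> V)"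

definition induced_connected :: "nat set set \<Rightarrow> nat set \<Rightarrow> bool" where
  "induced_connected Ed U \<longleftrightarrow>
     (\<forall>u\<in>U. \<forall>v\<in>U. (u, v) \<in> {(x, y). x \<in> U \<and> y \<in> U \<and> {x, y} \<in> Ed}\<^sup>*)"

definition presenting ::
  "'a set \<Rightarrow> ('a set \<Rightarrow> bool) \<Rightarrow> nat \<Rightarrow> (nat \<Rightarrow> 'a set) \<Rightarrow> 'a \<Rightarrow> nat set set \<Rightarrow> bool" where
  "presenting E indep r B e Ed \<longleftrightarrow>
     graph_on (idxBe r B e E) Ed \<and>
     (\<forall>i\<in>idxBe r B e E. \<forall>j\<in>idxBe r B e E. i \<noteq> j \<longrightarrow>
        induced_connected Ed (idxBe r B e (cl E indep (B i \<union> B j))))"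

definition minimal_presenting ::
  "'a set \<Rightarrow> ('a set \<Rightarrow> bool) \<Rightarrow> nat \<Rightarrow> (nat \<Rightarrow> 'a set) \<Rightarrow> 'a \<Rightarrow> nat set set \<Rightarrow> bool" where
  "minimal_presenting E indep r B e Ed \<longleftrightarrow>
     presenting E indep r B e Ed \<and> (\<forall>ed\<in>Ed. \<not> presenting E indep r B e (Ed - {ed}))"

end

theory Submission
  imports Defs
begin


definition maxin :: "('a set \<Rightarrow> bool) \<Rightarrow> 'a set \<Rightarrow> 'a set \<Rightarrow> bool" where
  "maxin indep X I \<longleftrightarrow> indep I \<and> I \<subseteq> X \<and> (\<forall>y\<in>X - I. \<not> indep (insert y I))"

lemma m_fin: "matroid E indep \<Longrightarrow> finite E" by (simp add: matroid_def)
lemma m_sub: "matroid E indep \<Longrightarrow> indep I \<Longrightarrow> I \<subseteq> E" by (simp add: matroid_def)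
lemma m_down: "matroid E indep \<Longrightarrow> indep J \<Longrightarrow> I \<subseteq> J \<Longrightarrow> indep I" unfolding matroid_def by blast
lemma m_aug: "matroid E indep \<Longrightarrow> indep I \<Longrightarrow> indep J \<Longrightarrow> card I < card J \<Longrightarrow> \<exists>x\<in>J - I. indep (insert x I)"
  unfolding matroid_def by blast

lemma rk_ge:
  assumes m: "matroid E indep" and "indep J" "J \<subseteq> X" "X \<subseteq> E"
  shows "card J \<le> rk indep X"
proof -
  have fin: "finite {card I | I. I \<subseteq> X \<and> indep I}"
  proof -
    have "{card I | I. I \<subseteq> X \<and> indep I} \<subseteq> card ` Pow X" by auto
    moreover have "finite X" using m_fin[OF m] assms(4) finite_subset by blast
    ultimately show ?thesis using finite_subset by blast
  qed
  show ?thesis unfolding rk_def using assms by (intro Max_ge[OF fin]) auto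
qed

lemma rk_maxin:
  assumes m: "matroid E indep" and X: "X \<subseteq> E" and mi: "maxin indep X I"
  shows "rk indep X = card I"
proof -
  have fin: "finite {card I | I. I \<subseteq> X \<and> indep I}"
  proof -
    have "{card I | I. I \<subseteq> X \<and> indep I} \<subseteq> card ` Pow X" by auto
    moreover have "finite X" using m_fin[OF m] X finite_subset by blast
    ultimately show ?thesis using finite_subset by blast
  qed
  have "\<forall>y\<in>{card I | I. I \<subseteq> X \<and> indep I}. y \<le> card I"
  proof
    fix y assume "y \<in> {card I | I. I \<subseteq> X \<and> indep I}"
    then obtain L where L: "y = card L" "L \<subseteq> X" "indep L" by auto
    show "y \<le> card I"
    proof (rule ccontr)
      assume "\<not> y \<le> card I"
      then have "card I < card L" using L by simp
      then obtain x where "x \<in> L - I" "indep (insert x I)" using m_aug[OF m] mi L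
        unfolding maxin_def by blast
      then show False using mi L unfolding maxin_def by blast
    qed
  qed
  moreover have "card I \<in> {card I | I. I \<subseteq> X \<and> indep I}" using mi unfolding maxin_def by blast
  ultimately show ?thesis unfolding rk_def by (intro Max_eqI[OF fin]) auto
qed

lemma ex_maxin:
  assumes m: "matroid E indep" and iI: "indep I" and IX: "I \<subseteq> X" and XE: "X \<subseteq> E"
  shows "\<exists>K. I \<subseteq> K \<and> maxin indep X K"
proof -
  define P where "P = (\<lambda>K. I \<subseteq> K \<and> K \<subseteq> X \<and> indep K)"
  have fE: "finite E" using m_fin[OF m] .
  have b: "\<forall>K. P K \<longrightarrow> card K < Suc (card E)"
  proof (intro allI impI)
    fix K assume "P K"
    then have "K \<subseteq> E" using XE unfolding P_def by blast
    then have "card K \<le> card E" using card_mono[OF fE] by blast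
    then show "card K < Suc (card E)" by simp
  qed
  have PI: "P I" using iI IX unfolding P_def by blast
  have "\<exists>K. P K \<and> (\<forall>L. P L \<longrightarrow> card L \<le> card K)"
    by (rule ex_has_greatest_nat[of P I card "Suc (card E)", OF PI b])
  then obtain K where K1: "P K" and K2: "\<forall>L. P L \<longrightarrow> card L \<le> card K"
    by blast
  have KX: "K \<subseteq> X" and IK: "I \<subseteq> K" and iK: "indep K" using K1 unfolding P_def by simp_all
  have fK: "finite K" using finite_subset[OF subset_trans[OF KX XE] fE] .
  have "maxin indep X K" unfolding maxin_def
  proof (intro conjI ballI)
    fix y assume y: "y \<in> X - K"
    show "\<not> indep (insert y K)"
    proof
      assume "indep (insert y K)"
      then have "P (insert y K)" using IK KX y unfolding P_def by blast
      then have "card (insert y K) \<le> card K" using K2 by blast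
      then show False using fK y by simp
    qed
  qed (use KX iK in auto)
  then show ?thesis using IK by blast
qed

lemma cl_char:
  assumes m: "matroid E indep" and Y: "Y \<subseteq> E" and mi: "maxin indep Y I" and x: "x \<in> E"
  shows "x \<in> cl E indep Y \<longleftrightarrow> x \<in> Y \<or> \<not> indep (insert x I)"
proof -
  have iI: "indep I" and IY: "I \<subseteq> Y" and mx: "\<forall>y\<in>Y - I. \<not> indep (insert y I)"
    using mi unfolding maxin_def by simp_all
  have fI: "finite I" using finite_subset[OF subset_trans[OF IY Y] m_fin[OF m]] .
  have rY: "rk indep Y = card I" using rk_maxin[OF m Y mi] .
  have xYE: "insert x Y \<subseteq> E" using x Y by simp
  show ?thesis
  proof
    assume c: "x \<in> cl E indep Y"
    show "x \<in> Y \<or> \<not> indep (insert x I)"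
    proof (rule ccontr)
      assume "\<not> (x \<in> Y \<or> \<not> indep (insert x I))"
      then have xy: "x \<notin> Y" and ii: "indep (insert x I)" by auto
      have xI: "x \<notin> I" using xy IY by blast
      have sub: "insert x I \<subseteq> insert x Y" using IY by blast
      have "card (insert x I) \<le> rk indep (insert x Y)"
        using rk_ge[OF m ii sub xYE] .
      moreover have "rk indep (insert x Y) = rk indep Y" using c unfolding cl_def by simp
      ultimately show False using xI fI rY by simp
    qed
  next
    assume h: "x \<in> Y \<or> \<not> indep (insert x I)"
    show "x \<in> cl E indep Y"
    proof (cases "x \<in> Y")
      case True then show ?thesis using x unfolding cl_def by (simp add: insert_absorb)
    next
      case False
      then have ni: "\<not> indep (insert x I)" using h by simp
      have "maxin indep (insert x Y) I" unfolding maxin_def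
      proof (intro conjI ballI)
        fix y assume "y \<in> insert x Y - I"
        then show "\<not> indep (insert y I)" using ni mx by blast
      qed (use iI IY in auto)
      then have "rk indep (insert x Y) = card I" using rk_maxin[OF m xYE] by simp
      then show ?thesis using rY x unfolding cl_def by simp
    qed
  qed
qed

lemma cl_sub: "cl E indep Y \<subseteq> E" unfolding cl_def by auto
lemma cl_ext: "Y \<subseteq> E \<Longrightarrow> Y \<subseteq> cl E indep Y" unfolding cl_def by (auto simp: insert_absorb)

lemma m_empty: "matroid E indep \<Longrightarrow> indep {}" by (simp add: matroid_def)

lemma cl_mono:
  assumes m: "matroid E indep" and ZW: "Z \<subseteq> W" and WE: "W \<subseteq> E"
  shows "cl E indep Z \<subseteq> cl E indep W"
proof
  fix x assume x: "x \<in> cl E indep Z"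
  have xE: "x \<in> E" using subsetD[OF cl_sub x] .
  have ZE: "Z \<subseteq> E" using ZW WE by (rule subset_trans)
  obtain I where I: "maxin indep Z I"
    using ex_maxin[OF m m_empty[OF m] empty_subsetI ZE] by blast
  have iI: "indep I" and IZ: "I \<subseteq> Z" using I unfolding maxin_def by simp_all
  have IW: "I \<subseteq> W" using IZ ZW by (rule subset_trans)
  obtain K where IK: "I \<subseteq> K" and K: "maxin indep W K"
    using ex_maxin[OF m iI IW WE] by blast
  have h: "x \<in> Z \<or> \<not> indep (insert x I)" using cl_char[OF m ZE I xE] x by simp
  have s: "insert x I \<subseteq> insert x K" using IK by blast
  have "x \<in> W \<or> \<not> indep (insert x K)"
  proof (cases "x \<in> Z")
    case True then show ?thesis using ZW by blast
  next
    case False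
    then have "\<not> indep (insert x I)" using h by simp
    then have "\<not> indep (insert x K)" using m_down[OF m _ s] by blast
    then show ?thesis by simp
  qed
  then show "x \<in> cl E indep W" using cl_char[OF m WE K xE] by simp
qed

lemma cl_least:
  assumes m: "matroid E indep" and Y: "Y \<subseteq> E" and Z: "Z \<subseteq> cl E indep Y"
  shows "cl E indep Z \<subseteq> cl E indep Y"
proof
  fix x assume x: "x \<in> cl E indep Z"
  have xE: "x \<in> E" using subsetD[OF cl_sub x] .
  have ZE: "Z \<subseteq> E" using subset_trans[OF Z cl_sub] .
  have YZE: "Y \<union> Z \<subseteq> E" using Y ZE by simp
  obtain I where I: "maxin indep Y I"
    using ex_maxin[OF m m_empty[OF m] empty_subsetI Y] by blast
  have iI: "indep I" and IY: "I \<subseteq> Y" and mx: "\<forall>y\<in>Y - I. \<not> indep (insert y I)"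
    using I unfolding maxin_def by simp_all
  have I2: "maxin indep (Y \<union> Z) I"
    unfolding maxin_def
  proof (intro conjI ballI)
    fix y assume y: "y \<in> Y \<union> Z - I"
    show "\<not> indep (insert y I)"
    proof (cases "y \<in> Y")
      case True then show ?thesis using mx y by blast
    next
      case False
      then have yZ: "y \<in> Z" using y by blast
      then have ycl: "y \<in> cl E indep Y" using Z by blast
      have yE: "y \<in> E" using yZ ZE by blast
      show ?thesis using cl_char[OF m Y I yE] ycl False by simp
    qed
  qed (use iI IY in auto)
  have "cl E indep Z \<subseteq> cl E indep (Y \<union> Z)" using cl_mono[OF m _ YZE] by simp
  then have "x \<in> cl E indep (Y \<union> Z)" using x by blast
  then have h: "x \<in> Y \<union> Z \<or> \<not> indep (insert x I)" using cl_char[OF m YZE I2 xE] by simp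
  show "x \<in> cl E indep Y"
  proof (cases "x \<in> Z")
    case True then show ?thesis using Z by blast
  next
    case False
    then have "x \<in> Y \<or> \<not> indep (insert x I)" using h by simp
    then show ?thesis using cl_char[OF m Y I xE] by simp
  qed
qed



lemma idxBe_mono: "X \<subseteq> Y \<Longrightarrow> idxBe r B e X \<subseteq> idxBe r B e Y"
  unfolding idxBe_def idxB_def by auto

lemma idx_upd:
  "idxBe r (A(i := S)) e X = {m \<in> idxBe r A e X. m \<noteq> i} \<union>
     (if i \<in> {1..r} \<and> S \<subseteq> X \<and> e \<in> S then {i} else {})"
  unfolding idxBe_def idxB_def by auto

lemma flat_conn:
  assumes m: "matroid E indep" and p: "presenting E indep r B e Ed" and Y: "Y \<subseteq> E"
  shows "induced_connected Ed (idxBe r B e (cl E indep Y))"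
  unfolding induced_connected_def
proof (intro ballI)
  fix u v assume u: "u \<in> idxBe r B e (cl E indep Y)" and v: "v \<in> idxBe r B e (cl E indep Y)"
  let ?U = "idxBe r B e (cl E indep Y)"
  show "(u, v) \<in> {(x, y). x \<in> ?U \<and> y \<in> ?U \<and> {x, y} \<in> Ed}\<^sup>*"
  proof (cases "u = v")
    case True then show ?thesis by simp
  next
    case False
    have sub: "?U \<subseteq> idxBe r B e E" using idxBe_mono[OF cl_sub] .
    have uE: "u \<in> idxBe r B e E" and vE: "v \<in> idxBe r B e E" using u v sub by auto
    let ?W = "idxBe r B e (cl E indep (B u \<union> B v))"
    have c: "induced_connected Ed ?W" using p uE vE False unfolding presenting_def by blast
    have Bu: "B u \<subseteq> cl E indep Y" and Bv: "B v \<subseteq> cl E indep Y"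
      using u v unfolding idxBe_def idxB_def by auto
    have "cl E indep (B u \<union> B v) \<subseteq> cl E indep Y" using cl_least[OF m Y] Bu Bv by simp
    then have WU: "?W \<subseteq> ?U" by (rule idxBe_mono)
    have BuE: "B u \<union> B v \<subseteq> E" using uE vE unfolding idxBe_def idxB_def by auto
    have "B u \<union> B v \<subseteq> cl E indep (B u \<union> B v)" using cl_ext[OF BuE] .
    then have uW: "u \<in> ?W" and vW: "v \<in> ?W" using uE vE unfolding idxBe_def idxB_def by auto
    have "(u, v) \<in> {(x, y). x \<in> ?W \<and> y \<in> ?W \<and> {x, y} \<in> Ed}\<^sup>*"
      using c uW vW unfolding induced_connected_def by blast
    moreover have "{(x, y). x \<in> ?W \<and> y \<in> ?W \<and> {x, y} \<in> Ed} \<subseteq> {(x, y). x \<in> ?U \<and> y \<in> ?U \<and> {x, y} \<in> Ed}"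
      using WU by auto
    ultimately show ?thesis using rtrancl_mono by blast
  qed
qed

lemma pres_char:
  assumes m: "matroid E indep"
  shows "presenting E indep r B e Ed \<longleftrightarrow> graph_on (idxBe r B e E) Ed \<and>
     (\<forall>Y. Y \<subseteq> E \<longrightarrow> induced_connected Ed (idxBe r B e (cl E indep Y)))"
proof
  assume p: "presenting E indep r B e Ed"
  then show "graph_on (idxBe r B e E) Ed \<and>
     (\<forall>Y. Y \<subseteq> E \<longrightarrow> induced_connected Ed (idxBe r B e (cl E indep Y)))"
    using flat_conn[OF m p] unfolding presenting_def by blast
next
  assume h: "graph_on (idxBe r B e E) Ed \<and>
     (\<forall>Y. Y \<subseteq> E \<longrightarrow> induced_connected Ed (idxBe r B e (cl E indep Y)))"
  have "\<forall>k\<in>idxBe r B e E. \<forall>l\<in>idxBe r B e E. k \<noteq> l \<longrightarrow>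
        induced_connected Ed (idxBe r B e (cl E indep (B k \<union> B l)))"
  proof (intro ballI impI)
    fix k l assume k: "k \<in> idxBe r B e E" and l: "l \<in> idxBe r B e E"
    have "B k \<union> B l \<subseteq> E" using k l unfolding idxBe_def idxB_def by auto
    then show "induced_connected Ed (idxBe r B e (cl E indep (B k \<union> B l)))" using h by blast
  qed
  then show "presenting E indep r B e Ed" using h unfolding presenting_def by blast
qed

lemma leaf:
  assumes "(u, w) \<in> {(x, y). x \<in> U' \<and> y \<in> U' \<and> {x, y} \<in> insert {i, j} H}\<^sup>*"
    and ui: "u \<noteq> i" and noi: "\<forall>ed\<in>H. i \<notin> ed" and UU: "U' - {i} \<subseteq> U" and ij: "i \<noteq> j"
  shows "(w \<noteq> i \<longrightarrow> (u, w) \<in> {(x, y). x \<in> U \<and> y \<in> U \<and> {x, y} \<in> H}\<^sup>*) \<and>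
         (w = i \<longrightarrow> (u, j) \<in> {(x, y). x \<in> U \<and> y \<in> U \<and> {x, y} \<in> H}\<^sup>*)"
  using assms(1)
proof (induction rule: rtrancl_induct)
  case base
  then show ?case using ui by simp
next
  case (step y z)
  let ?R = "{(x, y). x \<in> U \<and> y \<in> U \<and> {x, y} \<in> H}"
  have yz: "y \<in> U'" "z \<in> U'" "{y, z} \<in> insert {i, j} H" using step.hyps(2) by auto
  show ?case
  proof (cases "y = i")
    case True
    then have "{y, z} \<notin> H" using noi by blast
    then have "{y, z} = {i, j}" using yz(3) by blast
    then have "z = j" using True ij by (auto simp: doubleton_eq_iff)
    then show ?thesis using step.IH True ij by simp
  next
    case yi: False
    show ?thesis
    proof (cases "z = i")
      case True
      then have "{y, z} \<notin> H" using noi by blast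
      then have "{y, z} = {i, j}" using yz(3) by blast
      then have "y = j" using True yi by (auto simp: doubleton_eq_iff)
      then show ?thesis using step.IH True yi by simp
    next
      case zi: False
      have "{y, z} \<noteq> {i, j}" using yi zi by (auto simp: doubleton_eq_iff)
      then have "{y, z} \<in> H" using yz(3) by blast
      moreover have "y \<in> U" "z \<in> U" using yz yi zi UU by auto
      ultimately have "(y, z) \<in> ?R" by simp
      moreover have "(u, y) \<in> ?R\<^sup>*" using step.IH yi by simp
      ultimately show ?thesis using zi by (meson rtrancl.rtrancl_into_rtrancl)
    qed
  qed
qed

lemma no_out:
  assumes "(i, j) \<in> {(x, y). x \<in> U \<and> y \<in> U \<and> {x, y} \<in> H}\<^sup>*" and "i \<noteq> j"
    and noi: "\<forall>ed\<in>H. i \<notin> ed"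
  shows False
  using assms(1)
proof (cases rule: converse_rtranclE)
  case base then show ?thesis using assms(2) by simp
next
  case (step c)
  then show ?thesis using noi by auto
qed



theorem lemma3p6:
  fixes E :: "'a set" and indep :: "'a set \<Rightarrow> bool" and r :: nat
    and A :: "nat \<Rightarrow> 'a set" and e :: 'a and G :: "nat set set" and i :: nat
  assumes "matroid E indep"
    and "dual_presentation E indep r A"
    and "e \<in> E"
    and "minimal_presenting E indep r A e G"
    and "i \<in> {1..r}"
  shows "(e \<notin> cl E indep (A i) - A i \<longrightarrow>
            minimal_presenting E indep r (A(i := cl E indep (A i))) e G)
       \<and> (e \<in> cl E indep (A i) - A i \<longrightarrow>
            (\<forall>j\<in>idxBe r A e (cl E indep (A i)).
               minimal_presenting E indep r (A(i := cl E indep (A i))) e (insert {i, j} G)))"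
proof -
  note m = assms(1)
  have ir: "i \<in> {1..r}" using assms(5) .
  have AiE: "A i \<subseteq> E" using assms(2) ir unfolding dual_presentation_def by blast
  define C where "C = cl E indep (A i)"
  define A' where "A' = A(i := C)"
  have CE: "C \<subseteq> E" unfolding C_def by (rule cl_sub)
  have AC: "A i \<subseteq> C" unfolding C_def using cl_ext[OF AiE] .
  have pG: "presenting E indep r A e G" and minG: "\<forall>ed\<in>G. \<not> presenting E indep r A e (G - {ed})"
    using assms(4) unfolding minimal_presenting_def by auto
  have CX: "C \<subseteq> cl E indep Y \<longleftrightarrow> A i \<subseteq> cl E indep Y" if "Y \<subseteq> E" for Y
    using cl_least[OF m that, of "A i"] AC unfolding C_def by blast
  have part1: "e \<notin> C - A i \<longrightarrow> minimal_presenting E indep r A' e G"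
  proof
    assume h: "e \<notin> C - A i"
    have eq: "e \<in> C \<longleftrightarrow> e \<in> A i" using h AC by blast
    have idE: "idxBe r A' e E = idxBe r A e E"
      unfolding A'_def idx_upd using CE AiE eq ir unfolding idxBe_def idxB_def by auto
    have idY: "idxBe r A' e (cl E indep Y) = idxBe r A e (cl E indep Y)" if "Y \<subseteq> E" for Y
      unfolding A'_def idx_upd using CX[OF that] eq ir unfolding idxBe_def idxB_def by auto
    have pe: "presenting E indep r A' e Ed \<longleftrightarrow> presenting E indep r A e Ed" for Ed
      unfolding pres_char[OF m] idE using idY by simp
    show "minimal_presenting E indep r A' e G"
      unfolding minimal_presenting_def pe using pG minG by blast
  qed
  have part2: "\<forall>j\<in>idxBe r A e C. minimal_presenting E indep r A' e (insert {i, j} G)"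
    if h: "e \<in> C - A i"
  proof
    fix j assume j: "j \<in> idxBe r A e C"
    let ?V = "idxBe r A e E"
    let ?G' = "insert {i, j} G"
    have eC: "e \<in> C" and eA: "e \<notin> A i" using h by auto
    have jV: "j \<in> ?V" using j idxBe_mono[OF CE] by blast
    have ej: "e \<in> A j" and AjC: "A j \<subseteq> C" using j unfolding idxBe_def idxB_def by auto
    have ij: "i \<noteq> j" using ej eA by blast
    have iV: "\<forall>X. i \<notin> idxBe r A e X" using eA unfolding idxBe_def by auto
    have V'E: "idxBe r A' e E = insert i ?V"
      unfolding A'_def idx_upd using iV CE eC ir by auto
    have V'Y: "idxBe r A' e (cl E indep Y) =
        idxBe r A e (cl E indep Y) \<union> (if A i \<subseteq> cl E indep Y then {i} else {})" if "Y \<subseteq> E" for Y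
      unfolding A'_def idx_upd using iV CX[OF that] eC ir by auto
    have gG: "graph_on ?V G" using pG unfolding presenting_def by blast
    have noi: "\<forall>ed\<in>G. i \<notin> ed"
    proof
      fix ed assume "ed \<in> G"
      then obtain u v where "ed = {u, v}" "u \<in> ?V" "v \<in> ?V" using gG unfolding graph_on_def by blast
      then show "i \<notin> ed" using iV by blast
    qed
    have ijG: "{i, j} \<notin> G" using noi by blast
    have pG': "presenting E indep r A' e ?G'"
      unfolding pres_char[OF m]
    proof (intro conjI allI impI)
      show "graph_on (idxBe r A' e E) ?G'"
        unfolding V'E graph_on_def
      proof
        fix ed assume ed: "ed \<in> ?G'"
        show "\<exists>u v. ed = {u, v} \<and> u \<noteq> v \<and> u \<in> insert i ?V \<and> v \<in> insert i ?V"
        proof (cases "ed = {i, j}")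
          case True then show ?thesis using ij jV by blast
        next
          case False
          then have "ed \<in> G" using ed by blast
          then obtain u v where "ed = {u, v}" "u \<noteq> v" "u \<in> ?V" "v \<in> ?V" using gG unfolding graph_on_def by blast
          then show ?thesis by blast
        qed
      qed
    next
      fix Y assume Y: "Y \<subseteq> E"
      let ?U = "idxBe r A e (cl E indep Y)"
      let ?U' = "idxBe r A' e (cl E indep Y)"
      let ?R = "{(x, y). x \<in> ?U \<and> y \<in> ?U \<and> {x, y} \<in> G}"
      let ?R' = "{(x, y). x \<in> ?U' \<and> y \<in> ?U' \<and> {x, y} \<in> ?G'}"
      have cU: "induced_connected G ?U" using flat_conn[OF m pG Y] .
      have UU': "?U \<subseteq> ?U'" using V'Y[OF Y] by auto
      have RR: "?R \<subseteq> ?R'" using UU' by auto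
      have inU: "(u, v) \<in> ?R'\<^sup>*" if "u \<in> ?U" "v \<in> ?U" for u v
      proof -
        have "(u, v) \<in> ?R\<^sup>*" using cU that unfolding induced_connected_def by blast
        then show ?thesis using rtrancl_mono[OF RR] by blast
      qed
      show "induced_connected ?G' ?U'"
        unfolding induced_connected_def
      proof (intro ballI)
        fix u v assume u: "u \<in> ?U'" and v: "v \<in> ?U'"
        show "(u, v) \<in> ?R'\<^sup>*"
        proof (cases "i \<in> ?U'")
          case False
          then have "?U' = ?U" using V'Y[OF Y] by (auto split: if_splits)
          then show ?thesis using inU u v by simp
        next
          case True
          then have "A i \<subseteq> cl E indep Y" using V'Y[OF Y] iV by (auto split: if_splits)
          then have "C \<subseteq> cl E indep Y" using CX[OF Y] by blast
          then have jU: "j \<in> ?U" using AjC j unfolding idxBe_def idxB_def by auto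
          have e1: "(i, j) \<in> ?R'" using True jU UU' by auto
          have e2: "(j, i) \<in> ?R'" using True jU UU' by (auto simp: insert_commute)
          have toj: "(w, j) \<in> ?R'\<^sup>*" if "w \<in> ?U'" for w
          proof (cases "w = i")
            case True then show ?thesis using e1 by auto
          next
            case False
            then have "w \<in> ?U" using that V'Y[OF Y] by (auto split: if_splits)
            then show ?thesis using inU jU by blast
          qed
          have fromj: "(j, w) \<in> ?R'\<^sup>*" if "w \<in> ?U'" for w
          proof (cases "w = i")
            case True then show ?thesis using e2 by auto
          next
            case False
            then have "w \<in> ?U" using that V'Y[OF Y] by (auto split: if_splits)
            then show ?thesis using inU jU by blast
          qed
          show ?thesis using toj[OF u] fromj[OF v] by (rule rtrancl_trans)
        qed
      qed
    qed
    have minG': "\<forall>ed\<in>?G'. \<not> presenting E indep r A' e (?G' - {ed})"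
    proof
      fix ed assume ed: "ed \<in> ?G'"
      show "\<not> presenting E indep r A' e (?G' - {ed})"
      proof (cases "ed = {i, j}")
        case True
        then have eqG: "?G' - {ed} = G" using ijG by auto
        have iV': "i \<in> idxBe r A' e E" and jV': "j \<in> idxBe r A' e E" using V'E jV by auto
        let ?X = "cl E indep (A' i \<union> A' j)"
        have Aij: "A' i \<union> A' j \<subseteq> E" using CE jV ij unfolding A'_def idxBe_def idxB_def by auto
        have "A' i \<union> A' j \<subseteq> ?X" using cl_ext[OF Aij] .
        then have iX: "i \<in> idxBe r A' e ?X" and jX: "j \<in> idxBe r A' e ?X"
          using iV' jV' unfolding idxBe_def idxB_def by auto
        show ?thesis
        proof
          assume "presenting E indep r A' e (?G' - {ed})"
          then have pp: "presenting E indep r A' e G" unfolding eqG .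
          have "\<forall>k\<in>idxBe r A' e E. \<forall>l\<in>idxBe r A' e E. k \<noteq> l \<longrightarrow>
              induced_connected G (idxBe r A' e (cl E indep (A' k \<union> A' l)))"
            using pp unfolding presenting_def by (rule conjunct2)
          then have "induced_connected G (idxBe r A' e ?X)"
            using iV' jV' ij by blast
          then have "(i, j) \<in> {(x, y). x \<in> idxBe r A' e ?X \<and> y \<in> idxBe r A' e ?X \<and> {x, y} \<in> G}\<^sup>*"
            using iX jX unfolding induced_connected_def by blast
          then show False by (rule no_out[OF _ ij noi])
        qed
      next
        case False
        then have edG: "ed \<in> G" using ed by blast
        let ?H = "G - {ed}"
        have eqG: "?G' - {ed} = insert {i, j} ?H" using False by (simp add: insert_Diff_if)
        have "\<not> presenting E indep r A e ?H" using minG edG by blast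
        moreover have "graph_on ?V ?H" using gG unfolding graph_on_def by blast
        ultimately have "\<not> (\<forall>Y. Y \<subseteq> E \<longrightarrow> induced_connected ?H (idxBe r A e (cl E indep Y)))"
          unfolding pres_char[OF m] by simp
        then obtain Y where Y: "Y \<subseteq> E" and nc: "\<not> induced_connected ?H (idxBe r A e (cl E indep Y))"
          by blast
        let ?U = "idxBe r A e (cl E indep Y)"
        let ?U' = "idxBe r A' e (cl E indep Y)"
        obtain u v where u: "u \<in> ?U" and v: "v \<in> ?U"
          and nuv: "(u, v) \<notin> {(x, y). x \<in> ?U \<and> y \<in> ?U \<and> {x, y} \<in> ?H}\<^sup>*"
          using nc unfolding induced_connected_def by blast
        have UU': "?U \<subseteq> ?U'" using V'Y[OF Y] by auto
        have U'U: "?U' - {i} \<subseteq> ?U" using V'Y[OF Y] by (auto split: if_splits)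
        have noiH: "\<forall>ed\<in>?H. i \<notin> ed" using noi by blast
        have ui: "u \<noteq> i" and vi: "v \<noteq> i" using u v iV by auto
        show ?thesis
        proof
          assume "presenting E indep r A' e (?G' - {ed})"
          then have "\<forall>Y. Y \<subseteq> E \<longrightarrow> induced_connected (insert {i, j} ?H) (idxBe r A' e (cl E indep Y))"
            unfolding eqG pres_char[OF m] by (rule conjunct2)
          then have "induced_connected (insert {i, j} ?H) ?U'"
            using Y by blast
          then have "(u, v) \<in> {(x, y). x \<in> ?U' \<and> y \<in> ?U' \<and> {x, y} \<in> insert {i, j} ?H}\<^sup>*"
            using u v UU' unfolding induced_connected_def by blast
          from leaf[OF this ui noiH U'U ij] have "(u, v) \<in> {(x, y). x \<in> ?U \<and> y \<in> ?U \<and> {x, y} \<in> ?H}\<^sup>*"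
            using vi by blast
          then show False using nuv by blast
        qed
      qed
    qed
    show "minimal_presenting E indep r A' e ?G'"
      unfolding minimal_presenting_def using pG' minG' by blast
  qed
  show ?thesis using part1 part2 unfolding C_def A'_def by blast
qed

end
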